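(* Let $K,L\subset\mathbb{R}^n$ be nonempty compact sets with connected boundaries $\partial K$, $\partial L$, and with $K\cap L\ne\emptyset$. If neither $L$ is strictly contained in $K$ nor $K$ is strictly contained in $L$, then there exists $z\in\partial K\cap\partial L$.
   Context: "Strictly contained" means contained and not equal. *)

theory Defs
  imports "HOL-Analysis.Analysis"
begin

end

theory Submission
  imports Defs
begin

lemma fr_ne:
  fixes S :: "(real ^ 'n) set"
  assumes "bounded S" "S \<noteq> {}"
  shows "frontier S \<noteq> {}"
  using assms frontier_eq_empty not_bounded_UNIV by blast

lemma conn_side:
  fixes S T :: "(real ^ 'n) set"
  assumes "connected S" "S \<inter> frontier T = {}" "closed T"
  shows "S \<subseteq> interior T \<or> S \<inter> T = {}"
proof -
  have "S \<subseteq> T \<or> S \<inter> T = {}" using connected_Int_frontier[OF assms(1)] assms(2) by blast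
  moreover have "T = interior T \<union> frontier T" using assms(3)
    by (metis closure_closed closure_Un_frontier frontier_def Diff_partition interior_subset Un_commute)
  ultimately show ?thesis using assms(2) by blast
qed

lemma sub:
  fixes K L :: "(real ^ 'n) set"
  assumes "closed K" "bounded K" "closed L" "bounded L" "K \<noteq> {}"
    and h1: "frontier K \<subseteq> interior L" and h2: "frontier L \<inter> K = {}"
  shows "K \<subset> L"
proof -
  define S where "S = K \<inter> - interior L"
  have cS: "closed S" unfolding S_def using assms(1) by (simp add: closed_Int open_interior closed_Compl)
  have "frontier S \<subseteq> frontier K \<union> frontier (- interior L)"
    unfolding S_def by (rule frontier_Int_subset)
  also have "frontier (- interior L) \<subseteq> frontier L"
    by (simp add: frontier_interior_subset)
  finally have "frontier S \<subseteq> frontier K \<union> frontier L" by blast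
  moreover have "frontier S \<subseteq> S" using cS frontier_subset_closed by blast
  ultimately have "frontier S = {}" using h1 h2 unfolding S_def by blast
  moreover have "bounded S" unfolding S_def using assms(2) by (simp add: bounded_Int)
  ultimately have "S = {}" using fr_ne by blast
  hence KL: "K \<subseteq> interior L" unfolding S_def by blast
  have "frontier L \<noteq> {}" using fr_ne assms(4,5) KL interior_subset by blast
  moreover have "frontier L \<subseteq> L" using assms(3) frontier_subset_closed by blast
  ultimately show ?thesis using KL interior_subset h2 by blast
qed

theorem lemma15:
  fixes K L :: "(real ^ 'n) set"
  assumes "compact K" and "compact L"
    and "K \<noteq> {}" and "L \<noteq> {}"
    and "connected (frontier K)" and "connected (frontier L)"
    and "K \<inter> L \<noteq> {}"
    and "\<not> (L \<subset> K)" and "\<not> (K \<subset> L)"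
  shows "\<exists>z. z \<in> frontier K \<inter> frontier L"
proof (rule ccontr)
  assume "\<not> ?thesis"
  hence D: "frontier K \<inter> frontier L = {}" by blast
  have cK: "closed K" "bounded K" and cL: "closed L" "bounded L"
    using assms compact_imp_closed compact_imp_bounded by auto
  have fK: "frontier K \<subseteq> K" "frontier L \<subseteq> L" using cK cL frontier_subset_closed by auto
  have A: "frontier K \<subseteq> interior L \<or> frontier K \<inter> L = {}"
    using conn_side[OF assms(5) D cL(1)] .
  have B: "frontier L \<subseteq> interior K \<or> frontier L \<inter> K = {}"
    using conn_side[OF assms(6) _ cK(1)] D by blast
  show False
  proof (cases "frontier K \<subseteq> interior L")
    case a1: True
    show ?thesis
    proof (cases "frontier L \<subseteq> interior K")
      case True
      have "frontier (K \<union> L) \<subseteq> frontier K \<union> frontier L" by (rule frontier_Un_subset)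
      moreover have "interior K \<subseteq> interior (K \<union> L)" "interior L \<subseteq> interior (K \<union> L)"
        by (simp_all add: interior_mono)
      moreover have "frontier (K \<union> L) \<inter> interior (K \<union> L) = {}"
        by (auto simp add: frontier_def)
      ultimately have "frontier (K \<union> L) = {}" using a1 True by blast
      moreover have "bounded (K \<union> L)" using cK cL by auto
      ultimately show False using fr_ne assms(3) by blast
    next
      case False
      then show ?thesis using sub[OF cK cL assms(3) a1] B assms(9) by blast
    qed
  next
    case a1: False
    hence a2: "frontier K \<inter> L = {}" using A by blast
    show ?thesis
    proof (cases "frontier L \<subseteq> interior K")
      case True
      then show ?thesis using sub[OF cL cK assms(4) True] a2 assms(8) by blast
    next
      case False
      hence b2: "frontier L \<inter> K = {}" using B by blast
      have "frontier (K \<inter> L) \<subseteq> K \<inter> L" using cK cL by (meson closed_Int frontier_subset_closed)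
      moreover have "frontier (K \<inter> L) \<subseteq> frontier K \<union> frontier L" by (rule frontier_Int_subset)
      ultimately have "frontier (K \<inter> L) = {}" using a2 b2 by blast
      moreover have "bounded (K \<inter> L)" using cK by auto
      ultimately show False using fr_ne assms(7) by blast
    qed
  qed
qed

end
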